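(* Let $d$ be an integer and let $b=(b_1,\ldots,b_n)$, $\alpha=(\alpha_1,\ldots,\alpha_n)$, $\beta=(\beta_1,\ldots,\beta_n)$ be vectors of nonnegative integers with $\alpha_1\le\cdots\le\alpha_n=d$, $\beta_1\le\cdots\le\beta_n=d$, $\alpha_i\le\beta_i$ for all $i$, $\alpha_1=0$ and $\beta_1=b_1$. Then the system $$0\le u_i\le b_i\ (i=1,\ldots,n),\qquad \alpha_i\le u_1+\cdots+u_i\le\beta_i\ (i=1,\ldots,n)$$ has an integral solution $u=(u_1,\ldots,u_n)$ if and only if $\beta_i+b_{i+1}+\cdots+b_j\ge\alpha_j$ for every pair $i,j$ with $1\le i\le j\le n$. *)

theory Defs
  imports Main
begin

end

theory Submission
  imports Defs
begin

primrec gS :: "(nat \<Rightarrow> int) \<Rightarrow> (nat \<Rightarrow> int) \<Rightarrow> nat \<Rightarrow> int" where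
  "gS be bb 0 = 0"
| "gS be bb (Suc i) = min (be (Suc i)) (gS be bb i + bb (Suc i))"

lemma gS_tele: "(\<Sum>k=1..i. gS be bb k - gS be bb (k - 1)) = gS be bb i"
  by (induction i) (auto simp: sum.cl_ivl_Suc)

lemma gS_form:
  assumes "1 \<le> i" "be 1 = bb 1"
  shows "\<exists>j. 1 \<le> j \<and> j \<le> i \<and> gS be bb i = be j + (\<Sum>k=j+1..i. bb k)"
  using assms(1)
proof (induction i rule: dec_induct)
  case base
  then show ?case using assms(2) by (intro exI[of _ 1]) simp
next
  case (step i)
  then obtain j where j: "1 \<le> j" "j \<le> i" "gS be bb i = be j + (\<Sum>k=j+1..i. bb k)" by blast
  show ?case
  proof (cases "be (Suc i) \<le> gS be bb i + bb (Suc i)")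
    case True
    then show ?thesis by (intro exI[of _ "Suc i"]) simp
  next
    case False
    have "(\<Sum>k=j+1..Suc i. bb k) = (\<Sum>k=j+1..i. bb k) + bb (Suc i)"
      using j(2) by (simp add: sum.cl_ivl_Suc)
    then show ?thesis using False j by (intro exI[of _ j]) simp
  qed
qed

theorem lemma3p1:
  fixes n :: nat and d :: int and b alpha beta :: "nat \<Rightarrow> int"
  assumes "n \<ge> 1"
    and "\<forall>i\<in>{1..n}. b i \<ge> 0 \<and> alpha i \<ge> 0 \<and> beta i \<ge> 0"
    and "\<forall>i\<in>{1..<n}. alpha i \<le> alpha (i + 1)"
    and "\<forall>i\<in>{1..<n}. beta i \<le> beta (i + 1)"
    and "alpha n = d" and "beta n = d"
    and "\<forall>i\<in>{1..n}. alpha i \<le> beta i"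
    and "alpha 1 = 0" and "beta 1 = b 1"
  shows "(\<exists>u :: nat \<Rightarrow> int.
            (\<forall>i\<in>{1..n}. 0 \<le> u i \<and> u i \<le> b i) \<and>
            (\<forall>i\<in>{1..n}. alpha i \<le> (\<Sum>k=1..i. u k) \<and> (\<Sum>k=1..i. u k) \<le> beta i))
         \<longleftrightarrow> (\<forall>i j. 1 \<le> i \<and> i \<le> j \<and> j \<le> n \<longrightarrow>
                  beta i + (\<Sum>k=i+1..j. b k) \<ge> alpha j)"
proof
  assume "\<exists>u :: nat \<Rightarrow> int.
            (\<forall>i\<in>{1..n}. 0 \<le> u i \<and> u i \<le> b i) \<and>
            (\<forall>i\<in>{1..n}. alpha i \<le> (\<Sum>k=1..i. u k) \<and> (\<Sum>k=1..i. u k) \<le> beta i)"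
  then obtain u :: "nat \<Rightarrow> int" where u1: "\<forall>i\<in>{1..n}. 0 \<le> u i \<and> u i \<le> b i"
    and u2: "\<forall>i\<in>{1..n}. alpha i \<le> (\<Sum>k=1..i. u k) \<and> (\<Sum>k=1..i. u k) \<le> beta i" by blast
  show "\<forall>i j. 1 \<le> i \<and> i \<le> j \<and> j \<le> n \<longrightarrow> beta i + (\<Sum>k=i+1..j. b k) \<ge> alpha j"
  proof (intro allI impI)
    fix i j assume h: "1 \<le> i \<and> i \<le> j \<and> j \<le> n"
    have split: "(\<Sum>k=1..j. u k) = (\<Sum>k=1..i. u k) + (\<Sum>k=i+1..j. u k)"
      using h sum.ub_add_nat[of 1 i u "j - i"] by simp
    have "(\<Sum>k=i+1..j. u k) \<le> (\<Sum>k=i+1..j. b k)"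
      by (rule sum_mono) (use u1 h in auto)
    moreover have "alpha j \<le> (\<Sum>k=1..j. u k)" "(\<Sum>k=1..i. u k) \<le> beta i" using u2 h by auto
    ultimately show "beta i + (\<Sum>k=i+1..j. b k) \<ge> alpha j" using split by linarith
  qed
next
  assume H: "\<forall>i j. 1 \<le> i \<and> i \<le> j \<and> j \<le> n \<longrightarrow> beta i + (\<Sum>k=i+1..j. b k) \<ge> alpha j"
  define u where "u k = gS beta b k - gS beta b (k - 1)" for k
  have sumu: "(\<Sum>k=1..i. u k) = gS beta b i" for i
    unfolding u_def by (rule gS_tele)
  have le_beta: "gS beta b k \<le> beta k" if "k \<ge> 1" for k
    using that by (cases k) auto
  show "\<exists>u :: nat \<Rightarrow> int.
            (\<forall>i\<in>{1..n}. 0 \<le> u i \<and> u i \<le> b i) \<and>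
            (\<forall>i\<in>{1..n}. alpha i \<le> (\<Sum>k=1..i. u k) \<and> (\<Sum>k=1..i. u k) \<le> beta i)"
  proof (intro exI[of _ u] conjI ballI)
    fix i assume i: "i \<in> {1..n}"
    then obtain m where m: "i = Suc m" by (cases i) auto
    show "0 \<le> u i"
    proof (cases m)
      case 0
      then show ?thesis using m assms(9) assms(2) i by (auto simp: u_def)
    next
      case (Suc m')
      have "gS beta b m \<le> beta m" using le_beta Suc by simp
      moreover have "beta m \<le> beta i" using assms(4) i m Suc by auto
      moreover have "b i \<ge> 0" using assms(2) i by auto
      ultimately show ?thesis using m by (auto simp: u_def)
    qed
    show "u i \<le> b i" using m by (auto simp: u_def)
    show "(\<Sum>k=1..i. u k) \<le> beta i" using sumu le_beta i by auto
    obtain j where j: "1 \<le> j" "j \<le> i" "gS beta b i = beta j + (\<Sum>k=j+1..i. b k)"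
      using gS_form[of i beta b] i assms(9) by auto
    show "alpha i \<le> (\<Sum>k=1..i. u k)" using sumu j H i by auto
  qed
qed

end
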